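(* Fix $n\ge 3$, and let $a_0,\dots,a_{n-1}$ be regular closed subsets of $\mathbb{R}^2$ such that for all $0\le i<n$, $a_i\neq\emptyset$ and $\mathrm{int}(a_i\cup a_{[i+1]})$ is connected, and $a_i\cdot a_j=\emptyset$ for all $0\le i<j<n$. Then there exist Jordan arcs $\alpha_0,\dots,\alpha_{n-1}$ and points $p_0,\dots,p_{n-1}$ such that: for all $0\le i<n$, $\alpha_i$ is a Jordan arc from $p_i$ to $p_{[i+1]}$ with $\alpha_i\subseteq\mathrm{int}(a_i\cup a_{[i+1]})$; the concatenation $\alpha_0\cdots\alpha_{n-1}$ is a Jordan curve lying in $\mathrm{int}(a_0\cup\dots\cup a_{n-1})$; and $p_i\in\mathrm{int}(a_i)$ for all $0\le i<n$.
   Context: $[k]$ denotes $k\bmod n$. $a\cdot b$ denotes $\overline{\mathrm{int}(a\cap b)}$ (the product of regular closed sets). A Jordan arc is a continuous injective map from $[0,1]$ to $\mathbb{R}^2$ (or a constant map, a degenerate arc), identified with its image; a Jordan curve is a continuous injective map from the circle to $\mathbb{R}^2$. The concatenation $\alpha_0\cdots\alpha_{n-1}$ being a Jordan curve means each $\alpha_i$ ends where $\alpha_{[i+1]}$ begins and the union of the arcs, traversed in order, is a Jordan curve. *)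

theory Defs
  imports "HOL-Analysis.Analysis"
begin

definition regular_closed :: "'a::topological_space set \<Rightarrow> bool" where
  "regular_closed S \<longleftrightarrow> S = closure (interior S)"

definition rc_prod :: "'a::topological_space set \<Rightarrow> 'a set \<Rightarrow> 'a set" where
  "rc_prod a b = closure (interior (a \<inter> b))"

definition jordan_arc :: "(real \<Rightarrow> 'a::topological_space) \<Rightarrow> bool" where
  "jordan_arc g \<longleftrightarrow> path g \<and> (inj_on g {0..1} \<or> (\<forall>t\<in>{0..1}. g t = g 0))"

fun path_concat :: "(real \<Rightarrow> 'a::real_normed_vector) list \<Rightarrow> real \<Rightarrow> 'a" where
  "path_concat [] = (\<lambda>t. 0)"
| "path_concat [g] = g"
| "path_concat (g # gs) = g +++ path_concat gs"

end

theory Submission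
  imports Defs
begin


lemma first_hit:
  fixes g :: "real \<Rightarrow> 'a::real_normed_vector"
  assumes "path g" "closed K" "0 \<le> s" "\<exists>u\<in>{s..1}. g u \<in> K"
  shows "\<exists>t\<in>{s..1}. g t \<in> K \<and> (\<forall>u\<in>{s..<t}. g u \<notin> K)"
proof -
  have c: "continuous_on {s..1} g" using assms(1,3) unfolding path_def
    by (meson atLeastatMost_subset_iff continuous_on_subset order_refl)
  define T where "T = {s..1} \<inter> g -` K"
  have ne: "T \<noteq> {}" using assms(4) unfolding T_def by auto
  have "closed T" unfolding T_def
    by (rule continuous_closed_preimage) (use c assms(2) in auto)
  then have "compact T" unfolding T_def by (simp add: compact_eq_bounded_closed bounded_Int)
  then obtain t where "t \<in> T" "\<forall>y\<in>T. t \<le> y" using compact_attains_inf ne by blast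
  then show ?thesis unfolding T_def by force
qed

lemma open_sub_closed:
  fixes S :: "'a::topological_space set"
  assumes "open S" "S \<subseteq> C \<union> D" "closed C" "interior D = {}"
  shows "S \<subseteq> interior C"
proof -
  have "S \<subseteq> interior (C \<union> D)" using assms by (simp add: interior_maximal)
  also have "\<dots> = interior C" by (rule interior_closed_Un_empty_interior) (use assms in auto)
  finally show ?thesis .
qed

lemma interior_Un_empty:
  fixes A :: "'a::topological_space set"
  assumes "closed A" "interior A = {}" "interior B = {}"
  shows "interior (A \<union> B) = {}"
  using interior_closed_Un_empty_interior[OF assms(1,3)] assms(2) by simp

lemma concat_arc:
  fixes gs :: "(real \<Rightarrow> 'a::real_normed_vector) list"
  assumes "gs \<noteq> []" "\<forall>g\<in>set gs. arc g"
    "\<forall>k. Suc k < length gs \<longrightarrow> pathfinish (gs!k) = pathstart (gs!Suc k)"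
    "\<forall>k. Suc k < length gs \<longrightarrow> path_image (gs!k) \<inter> path_image (gs!Suc k) \<subseteq> {pathstart (gs!Suc k)}"
    "\<forall>k l. Suc k < l \<longrightarrow> l < length gs \<longrightarrow> path_image (gs!k) \<inter> path_image (gs!l) = {}"
  shows "arc (path_concat gs) \<and> pathstart (path_concat gs) = pathstart (hd gs)
     \<and> pathfinish (path_concat gs) = pathfinish (last gs)
     \<and> path_image (path_concat gs) = (\<Union>g\<in>set gs. path_image g)"
  using assms
proof (induction gs rule: path_concat.induct)
  case 1 then show ?case by simp
next
  case (2 g) then show ?case by simp
next
  case (3 g h t)
  have IH: "arc (path_concat (h#t)) \<and> pathstart (path_concat (h#t)) = pathstart h
     \<and> pathfinish (path_concat (h#t)) = pathfinish (last (h#t))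
     \<and> path_image (path_concat (h#t)) = (\<Union>g\<in>set (h#t). path_image g)"
  proof -
    have a3: "\<forall>k. Suc k < length (h#t) \<longrightarrow> pathfinish ((h#t)!k) = pathstart ((h#t)!Suc k)"
    proof (intro allI impI)
      fix k assume "Suc k < length (h#t)"
      then show "pathfinish ((h#t)!k) = pathstart ((h#t)!Suc k)"
        using "3.prems"(3)[rule_format, of "Suc k"] by simp
    qed
    have a4: "\<forall>k. Suc k < length (h#t) \<longrightarrow> path_image ((h#t)!k) \<inter> path_image ((h#t)!Suc k) \<subseteq> {pathstart ((h#t)!Suc k)}"
    proof (intro allI impI)
      fix k assume "Suc k < length (h#t)"
      then show "path_image ((h#t)!k) \<inter> path_image ((h#t)!Suc k) \<subseteq> {pathstart ((h#t)!Suc k)}"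
        using "3.prems"(4)[rule_format, of "Suc k"] by simp
    qed
    have a5: "\<forall>k l. Suc k < l \<longrightarrow> l < length (h#t) \<longrightarrow> path_image ((h#t)!k) \<inter> path_image ((h#t)!l) = {}"
    proof (intro allI impI)
      fix k l assume "Suc k < l" "l < length (h#t)"
      then show "path_image ((h#t)!k) \<inter> path_image ((h#t)!l) = {}"
        using "3.prems"(5)[rule_format, of "Suc k" "Suc l"] by simp
    qed
    show ?thesis using "3.IH"[OF _ _ a3 a4 a5] "3.prems"(2) by simp
  qed
  have fin: "pathfinish g = pathstart h" using "3.prems"(3)[rule_format, of 0] by simp
  have int: "path_image g \<inter> path_image (path_concat (h#t)) \<subseteq> {pathstart (path_concat (h#t))}"
  proof
    fix x assume x: "x \<in> path_image g \<inter> path_image (path_concat (h#t))"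
    then have "x \<in> (\<Union>g\<in>set (h#t). path_image g)" using IH by simp
    then obtain g' where "g' \<in> set (h#t)" "x \<in> path_image g'" by blast
    then have "\<exists>l < length (h#t). x \<in> path_image ((h#t)!l)"
      by (metis in_set_conv_nth)
    then obtain l where l: "l < length (h#t)" "x \<in> path_image ((h#t)!l)" by blast
    show "x \<in> {pathstart (path_concat (h#t))}"
    proof (cases l)
      case 0
      then show ?thesis using x l "3.prems"(4)[rule_format, of 0] IH by auto
    next
      case (Suc l')
      then show ?thesis using x l "3.prems"(5)[rule_format, of 0 "Suc l"] by auto
    qed
  qed
  have "arc (g +++ path_concat (h#t))"
    by (rule arc_join) (use "3.prems"(2) IH fin int in auto)
  then show ?case using IH fin by (simp add: path_image_join)
qed


lemma mod_ne1: "(n::nat) \<ge> 3 \<Longrightarrow> i < n \<Longrightarrow> i \<noteq> (i + 1) mod n"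
proof (cases "i + 1 < n")
  case False assume "n \<ge> 3" "i < n" then have "i + 1 = n" using False by simp
  then show ?thesis using \<open>n\<ge>3\<close> by simp
qed simp
lemma mod_ne2: "(n::nat) \<ge> 3 \<Longrightarrow> i < n \<Longrightarrow> i \<noteq> ((i + 1) mod n + 1) mod n"
proof -
  assume n: "n \<ge> 3" "i < n"
  consider "i + 2 < n" | "i + 2 = n" | "i + 1 = n" using n by linarith
  then show ?thesis
  proof cases
    case 1 then show ?thesis by simp
  next
    case 2 then have "(i + 1) mod n = i + 1" by simp
    then show ?thesis using 2 n by simp
  next
    case 3 then have "(i + 1) mod n = 0" by simp
    then show ?thesis using 3 n by simp
  qed
qed
lemma mod_inj: "(i::nat) < n \<Longrightarrow> j < n \<Longrightarrow> (i + 1) mod n = (j + 1) mod n \<Longrightarrow> i = j"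
  by (cases "i + 1 < n"; cases "j + 1 < n") (auto simp: mod_if split: if_splits)
lemma mod_lt: "0 < (n::nat) \<Longrightarrow> (i + 1) mod n < n" by simp


theorem lemma5p2:
  fixes n :: nat and a :: "nat \<Rightarrow> (real^2) set"
  assumes n3: "n \<ge> 3"
    and rc: "\<And>i. i < n \<Longrightarrow> regular_closed (a i)"
    and ne: "\<And>i. i < n \<Longrightarrow> a i \<noteq> {}"
    and conn: "\<And>i. i < n \<Longrightarrow> connected (interior (a i \<union> a ((i + 1) mod n)))"
    and disj: "\<And>i j. i < j \<Longrightarrow> j < n \<Longrightarrow> rc_prod (a i) (a j) = {}"
  shows "\<exists>(\<alpha> :: nat \<Rightarrow> real \<Rightarrow> real^2) (p :: nat \<Rightarrow> real^2).
           (\<forall>i<n. jordan_arc (\<alpha> i) \<and> pathstart (\<alpha> i) = p i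
                   \<and> pathfinish (\<alpha> i) = p ((i + 1) mod n)
                   \<and> path_image (\<alpha> i) \<subseteq> interior (a i \<union> a ((i + 1) mod n)))
         \<and> simple_path (path_concat (map \<alpha> [0..<n]))
         \<and> pathfinish (path_concat (map \<alpha> [0..<n])) = pathstart (path_concat (map \<alpha> [0..<n]))
         \<and> path_image (path_concat (map \<alpha> [0..<n])) \<subseteq> interior (\<Union>i<n. a i)
         \<and> (\<forall>i<n. p i \<in> interior (a i))"
proof -
  define OI where "OI i = interior (a i)" for i
  define U where "U i = interior (a i \<union> a ((i + 1) mod n))" for i
  have n0: "0 < n" "Suc 0 < n" using n3 by auto
  have nx: "\<And>i. (i + 1) mod n < n" using n0 by simp
  have cl: "\<And>i. i < n \<Longrightarrow> closed (a i)" using rc unfolding regular_closed_def by (metis closed_closure)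
  have aclO: "\<And>i. i < n \<Longrightarrow> a i = closure (OI i)" using rc unfolding regular_closed_def OI_def by blast
  have One: "\<And>i. i < n \<Longrightarrow> OI i \<noteq> {}" using aclO ne by fastforce
  have E: "\<And>i j. i < n \<Longrightarrow> j < n \<Longrightarrow> i \<noteq> j \<Longrightarrow> interior (a i \<inter> a j) = {}"
  proof -
    fix i j assume "i < n" "j < n" "i \<noteq> j"
    then have "rc_prod (a i) (a j) = {} \<or> rc_prod (a j) (a i) = {}"
      using disj by (metis linorder_neqE_nat)
    then show "interior (a i \<inter> a j) = {}" unfolding rc_prod_def by (auto simp: Int_commute)
  qed
  have OO: "\<And>i j. i < n \<Longrightarrow> j < n \<Longrightarrow> i \<noteq> j \<Longrightarrow> OI i \<inter> OI j = {}"
    using E unfolding OI_def by (metis interior_Int)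
  have aO: "\<And>i j. i < n \<Longrightarrow> j < n \<Longrightarrow> i \<noteq> j \<Longrightarrow> a i \<inter> OI j = {}"
  proof -
    fix i j assume ij: "i < n" "j < n" "i \<noteq> j"
    have "OI j \<inter> closure (OI i) = {}"
      using open_Int_closure_eq_empty[of "OI j" "OI i"] OO[OF ij] unfolding OI_def by auto
    then show "a i \<inter> OI j = {}" using aclO[OF ij(1)] by auto
  qed
  have OsubU: "\<And>i. OI i \<subseteq> U i" "\<And>i. OI ((i + 1) mod n) \<subseteq> U i"
    unfolding OI_def U_def by (simp_all add: interior_mono)
  have Usub: "\<And>i. U i \<subseteq> a i \<union> a ((i + 1) mod n)" unfolding U_def by (rule interior_subset)
  have openU: "\<And>i. open (U i)" unfolding U_def by simp
  have OU: "\<And>k i. k < n \<Longrightarrow> i < n \<Longrightarrow> k \<noteq> i \<Longrightarrow> k \<noteq> (i + 1) mod n \<Longrightarrow> OI k \<inter> U i = {}"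
  proof -
    fix k i assume "k < n" "i < n" "k \<noteq> i" "k \<noteq> (i + 1) mod n"
    then have "a i \<inter> OI k = {}" "a ((i + 1) mod n) \<inter> OI k = {}" using aO nx by auto
    then show "OI k \<inter> U i = {}" using Usub[of i] by blast
  qed
  have UUadj: "\<And>i. i < n \<Longrightarrow> U i \<inter> U ((i + 1) mod n) \<subseteq> OI ((i + 1) mod n)"
  proof -
    fix i assume i: "i < n"
    define j where "j = (i + 1) mod n"
    define k where "k = (j + 1) mod n"
    have jk: "j < n" "k < n" "i \<noteq> k" using nx mod_ne2[OF n3 i] unfolding j_def k_def by auto
    have sub: "U i \<inter> U j \<subseteq> a j \<union> (a i \<inter> a k)" using Usub[of i] Usub[of j] unfolding j_def k_def by blast
    have "U i \<inter> U j \<subseteq> interior (a j)"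
      by (rule open_sub_closed[OF _ sub]) (use openU cl jk E i in auto)
    then show "U i \<inter> U ((i + 1) mod n) \<subseteq> OI ((i + 1) mod n)" unfolding j_def OI_def .
  qed
  have UUnon: "\<And>i j. i < n \<Longrightarrow> j < n \<Longrightarrow> i \<noteq> j \<Longrightarrow> j \<noteq> (i + 1) mod n \<Longrightarrow> i \<noteq> (j + 1) mod n
      \<Longrightarrow> U i \<inter> U j = {}"
  proof -
    fix i j assume ij: "i < n" "j < n" "i \<noteq> j" "j \<noteq> (i + 1) mod n" "i \<noteq> (j + 1) mod n"
    define i' where "i' = (i + 1) mod n"
    define j' where "j' = (j + 1) mod n"
    have ne': "i' \<noteq> j'" using mod_inj ij unfolding i'_def j'_def by blast
    have lt: "i' < n" "j' < n" using nx unfolding i'_def j'_def by auto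
    have sub: "U i \<inter> U j \<subseteq> ((a i \<inter> a j) \<union> (a i \<inter> a j')) \<union> ((a i' \<inter> a j) \<union> (a i' \<inter> a j'))"
      using Usub[of i] Usub[of j] unfolding i'_def j'_def by blast
    have e1: "interior (a i \<inter> a j) = {}" "interior (a i \<inter> a j') = {}"
      "interior (a i' \<inter> a j) = {}" "interior (a i' \<inter> a j') = {}"
      using E ij lt ne' unfolding i'_def j'_def by auto
    have c1: "closed (a i \<inter> a j)" "closed (a i \<inter> a j')" "closed (a i' \<inter> a j)" "closed (a i' \<inter> a j')"
      using cl ij lt by auto
    have "interior (((a i \<inter> a j) \<union> (a i \<inter> a j')) \<union> ((a i' \<inter> a j) \<union> (a i' \<inter> a j'))) = {}"
      by (intro interior_Un_empty closed_Un) (use e1 c1 in auto)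
    moreover have "U i \<inter> U j \<subseteq> interior (((a i \<inter> a j) \<union> (a i \<inter> a j')) \<union> ((a i' \<inter> a j) \<union> (a i' \<inter> a j')))"
      using sub openU[of i] openU[of j] by (simp add: interior_maximal open_Int)
    ultimately show "U i \<inter> U j = {}" by blast
  qed

  have "\<forall>i. \<exists>x. i < n \<longrightarrow> x \<in> OI i" using One by blast
  from choice[OF this] obtain p where p0: "\<forall>i. i < n \<longrightarrow> p i \<in> OI i" by blast
  have p: "\<And>i. i < n \<Longrightarrow> p i \<in> OI i" using p0 by blast
  have "\<forall>i. \<exists>g. i < n \<longrightarrow> arc g \<and> path_image g \<subseteq> U i \<and> pathstart g = p i \<and> pathfinish g = p ((i + 1) mod n)"
  proof
    fix i show "\<exists>g. i < n \<longrightarrow> arc g \<and> path_image g \<subseteq> U i \<and> pathstart g = p i \<and> pathfinish g = p ((i + 1) mod n)"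
    proof (cases "i < n")
      case True
      have pc: "path_connected (U i)" unfolding U_def
        by (rule connected_open_path_connected) (use conn True in auto)
      have in1: "p i \<in> U i" "p ((i + 1) mod n) \<in> U i"
        using p[OF True] p[OF nx[of i]] OsubU(1)[of i] OsubU(2)[of i] by auto
      have "i \<noteq> (i + 1) mod n" using mod_ne1[OF n3 True] .
      then have "OI i \<inter> OI ((i + 1) mod n) = {}" using OO[OF True nx[of i]] by simp
      then have "p i \<noteq> p ((i + 1) mod n)" using p[OF True] p[OF nx[of i]] by auto
      then obtain g where "arc g \<and> path_image g \<subseteq> U i \<and> pathstart g = p i \<and> pathfinish g = p ((i + 1) mod n)"
        using pc in1 unfolding path_connected_arcwise by meson
      then show ?thesis by blast
    qed simp
  qed
  from choice[OF this] obtain \<beta> where \<beta>0: "\<forall>i. i < n \<longrightarrow> arc (\<beta> i) \<and> path_image (\<beta> i) \<subseteq> U i \<and> pathstart (\<beta> i) = p i \<and> pathfinish (\<beta> i) = p ((i + 1) mod n)"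
    by blast
  have \<beta>: "\<And>i. i < n \<Longrightarrow> arc (\<beta> i) \<and> path_image (\<beta> i) \<subseteq> U i \<and> pathstart (\<beta> i) = p i \<and> pathfinish (\<beta> i) = p ((i + 1) mod n)"
    using \<beta>0 by blast
  have \<beta>path: "\<And>i. i < n \<Longrightarrow> path (\<beta> i)" using \<beta> arc_imp_path by blast
  have \<beta>img: "\<And>i u. i < n \<Longrightarrow> u \<in> {0..1} \<Longrightarrow> \<beta> i u \<in> path_image (\<beta> i)"
    unfolding path_image_def by blast

  define FH where "FH g K s = (SOME t. t \<in> {s..1} \<and> g t \<in> K \<and> (\<forall>u\<in>{s..<t}. g u \<notin> K))"
    for g :: "real \<Rightarrow> real^2" and K and s :: real
  have FH: "FH g K s \<in> {s..1} \<and> g (FH g K s) \<in> K \<and> (\<forall>u\<in>{s..<FH g K s}. g u \<notin> K)"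
    if "path g" "closed K" "0 \<le> s" "\<exists>u\<in>{s..1}. g u \<in> K" for g K s
  proof -
    have "\<exists>t. t \<in> {s..1} \<and> g t \<in> K \<and> (\<forall>u\<in>{s..<t}. g u \<notin> K)"
      using first_hit[OF that] by blast
    then show ?thesis unfolding FH_def by (rule someI_ex)
  qed
  define PR where "PR g x = (SOME s. s \<in> {0..1} \<and> g s = x)" for g :: "real \<Rightarrow> real^2" and x
  have PR: "PR g x \<in> {0..1} \<and> g (PR g x) = x" if "x \<in> path_image g" for g x
  proof -
    have "\<exists>s. s \<in> {0..1} \<and> g s = x" using that unfolding path_image_def by blast
    then show ?thesis unfolding PR_def by (rule someI_ex)
  qed
  define T where "T k s = FH (\<beta> k) (path_image (\<beta> (Suc k))) s" for k s
  define sq where "sq = rec_nat (0::real) (\<lambda>k x. PR (\<beta> (Suc k)) (\<beta> k (T k x)))"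
  have sq0: "sq 0 = 0" and sqS: "\<And>k. sq (Suc k) = PR (\<beta> (Suc k)) (\<beta> k (T k (sq k)))"
    by (simp_all add: sq_def)
  have Tprop: "T k s \<in> {s..1} \<and> \<beta> k (T k s) \<in> path_image (\<beta> (Suc k))
      \<and> (\<forall>u\<in>{s..<T k s}. \<beta> k u \<notin> path_image (\<beta> (Suc k)))"
    if "Suc k < n" "s \<in> {0..1}" for k s
  proof -
    have k: "k < n" using that by simp
    have "\<beta> k 1 = p (Suc k)" using \<beta>[OF k] that unfolding pathfinish_def by simp
    also have "\<dots> = pathstart (\<beta> (Suc k))" using \<beta>[OF that(1)] by simp
    finally have "\<beta> k 1 \<in> path_image (\<beta> (Suc k))" using pathstart_in_path_image by metis
    then have ex: "\<exists>u\<in>{s..1}. \<beta> k u \<in> path_image (\<beta> (Suc k))" using that by auto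
    show ?thesis unfolding T_def
      by (rule FH[OF \<beta>path[OF k] closed_path_image[OF \<beta>path[OF that(1)]] _ ex]) (use that in auto)
  qed
  have inv: "sq k \<in> {0..1} \<and> \<beta> k (sq k) \<in> OI k" if "k < n" for k
    using that
  proof (induction k)
    case 0
    have "\<beta> 0 0 = p 0" using \<beta>[OF n0(1)] unfolding pathstart_def by simp
    then show ?case using sq0 p[OF n0(1)] by simp
  next
    case (Suc k)
    have k: "k < n" using Suc by simp
    define x where "x = \<beta> k (T k (sq k))"
    have tp: "T k (sq k) \<in> {sq k..1}" "x \<in> path_image (\<beta> (Suc k))"
      using Tprop[OF Suc.prems] Suc.IH[OF k] unfolding x_def by auto
    have "x \<in> path_image (\<beta> k)" unfolding x_def
      by (rule \<beta>img[OF k]) (use tp Suc.IH[OF k] in auto)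
    then have "x \<in> U k \<inter> U ((k + 1) mod n)" using \<beta>[OF k] \<beta>[OF Suc.prems] tp Suc.prems by auto
    then have "x \<in> OI (Suc k)" using UUadj[OF k] Suc.prems by auto
    then show ?case using PR[OF tp(2)] sqS[of k] unfolding x_def by simp
  qed
  have Tlt: "sq k < T k (sq k)" if "Suc k < n" for k
  proof -
    have k: "k < n" using that by simp
    have tp: "T k (sq k) \<in> {sq k..1}" "\<beta> k (T k (sq k)) \<in> path_image (\<beta> (Suc k))"
      using Tprop[OF that] inv[OF k] by auto
    have "(k + 1) mod n = Suc k" using that by simp
    then have "k \<noteq> (Suc k + 1) mod n" using mod_ne2[OF n3 k] by simp
    then have "OI k \<inter> U (Suc k) = {}" using OU[OF k that] by simp
    moreover have "path_image (\<beta> (Suc k)) \<subseteq> U (Suc k)" using \<beta>[OF that] by simp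
    ultimately have "T k (sq k) \<noteq> sq k" using tp inv[OF k] by auto
    then show ?thesis using tp by simp
  qed
  have Tend: "\<beta> k (T k (sq k)) = \<beta> (Suc k) (sq (Suc k))" if "Suc k < n" for k
    using PR[of "\<beta> k (T k (sq k))" "\<beta> (Suc k)"] Tprop[OF that] inv[of k] that sqS[of k] by simp

  define m where "m = n - 1"
  have m: "m < n" "Suc m = n" "0 < m" "m \<noteq> 1" "(m + 1) mod n = 0" "m \<noteq> 0"
    using n3 unfolding m_def by auto
  define t0 where "t0 = T 0 (sq 0)"
  have t0: "0 < t0" "t0 \<le> 1" using Tlt[OF n0(2)] Tprop[OF n0(2), of "sq 0"] inv[OF n0(1)] sq0
    unfolding t0_def by auto
  define K where "K = path_image (subpath 0 t0 (\<beta> 0))"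
  have K: "K = \<beta> 0 ` {0..t0}" unfolding K_def using t0 by (simp add: path_image_subpath)
  have Ksub: "K \<subseteq> path_image (\<beta> 0)" unfolding K_def
    by (rule path_image_subpath_subset) (use t0 in auto)
  have Kcl: "closed K" unfolding K_def
    by (rule closed_path_image, rule path_subpath) (use t0 \<beta>path[OF n0(1)] in auto)
  have "\<beta> m 1 = p 0" using \<beta>[OF m(1)] m(5) unfolding pathfinish_def by simp
  also have "\<dots> = \<beta> 0 0" using \<beta>[OF n0(1)] unfolding pathstart_def by simp
  finally have "\<beta> m 1 \<in> K" unfolding K using t0 by auto
  then have exm: "\<exists>u\<in>{sq m..1}. \<beta> m u \<in> K" using inv[OF m(1)] by auto
  define tl where "tl = FH (\<beta> m) K (sq m)"
  have tl: "tl \<in> {sq m..1}" "\<beta> m tl \<in> K" "\<forall>u\<in>{sq m..<tl}. \<beta> m u \<notin> K"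
    using FH[OF \<beta>path[OF m(1)] Kcl _ exm] inv[OF m(1)] unfolding tl_def by auto
  have "\<exists>s. s \<in> {0..t0} \<and> \<beta> 0 s = \<beta> m tl" using tl(2) unfolding K by auto
  then obtain s0 where s0: "s0 \<in> {0..t0}" "\<beta> 0 s0 = \<beta> m tl" by blast
  have q0m: "\<beta> m tl \<in> path_image (\<beta> m)"
    by (rule \<beta>img[OF m(1)]) (use tl inv[OF m(1)] in auto)
  have "\<beta> m tl \<in> U m \<inter> U ((m + 1) mod n)" using q0m tl(2) Ksub \<beta>[OF m(1)] \<beta>[OF n0(1)] m(5) by auto
  then have q0: "\<beta> m tl \<in> OI 0" using UUadj[OF m(1)] m(5) by auto
  have t0e: "\<beta> 0 t0 = \<beta> 1 (sq 1)" using Tend[OF n0(2)] unfolding t0_def by simp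
  have "\<beta> 1 (sq 1) \<in> OI 1" using inv[OF n0(2)] by simp
  moreover have "OI 0 \<inter> OI 1 = {}" using OO[OF n0(1) n0(2)] by simp
  ultimately have "s0 \<noteq> t0" using s0 q0 t0e by auto
  then have s0t0: "s0 < t0" using s0 by simp
  have "OI m \<inter> U 0 = {}" using OU[OF m(1) n0(1)] m(4,6) n0 by simp
  then have "tl \<noteq> sq m" using tl(2) Ksub \<beta>[OF n0(1)] inv[OF m(1)] by auto
  then have tlm: "sq m < tl" using tl(1) by simp

  define \<alpha> where "\<alpha> i = (if i = 0 then subpath s0 t0 (\<beta> 0) else if i < m then subpath (sq i) (T i (sq i)) (\<beta> i)
      else subpath (sq m) tl (\<beta> m))" for i
  define P where "P i = (if i = 0 then \<beta> m tl else \<beta> i (sq i))" for i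
  have \<alpha>0: "\<alpha> 0 = subpath s0 t0 (\<beta> 0)" unfolding \<alpha>_def by simp
  have \<alpha>mid: "\<alpha> i = subpath (sq i) (T i (sq i)) (\<beta> i)" if "i \<noteq> 0" "i < m" for i
    unfolding \<alpha>_def using that by simp
  have \<alpha>m: "\<alpha> m = subpath (sq m) tl (\<beta> m)" unfolding \<alpha>_def using m by simp
  have Tin: "T i (sq i) \<in> {0..1}" "sq i \<in> {0..1}" if "Suc i < n" for i
    using Tprop[OF that, of "sq i"] inv[of i] that by auto
  have arc\<alpha>: "arc (\<alpha> i)" if "i < n" for i
  proof -
    consider "i = 0" | "i \<noteq> 0" "i < m" | "i = m" using \<open>i < n\<close> m by linarith
    then show ?thesis
    proof cases
      case 1 then show ?thesis unfolding 1 \<alpha>0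
        by (intro arc_subpath_arc) (use \<beta>[OF n0(1)] s0 s0t0 t0 in auto)
    next
      case 2 then have "Suc i < n" using m by simp
      then show ?thesis unfolding \<alpha>mid[OF 2]
        by (intro arc_subpath_arc) (use \<beta>[OF that] Tin[of i] Tlt[of i] in auto)
    next
      case 3 then show ?thesis unfolding 3 \<alpha>m
        by (intro arc_subpath_arc) (use \<beta>[OF m(1)] tl inv[OF m(1)] tlm in auto)
    qed
  qed
  have img\<alpha>: "path_image (\<alpha> i) \<subseteq> path_image (\<beta> i)" if "i < n" for i
  proof -
    consider "i = 0" | "i \<noteq> 0" "i < m" | "i = m" using \<open>i < n\<close> m by linarith
    then show ?thesis
    proof cases
      case 1 then show ?thesis unfolding 1 \<alpha>0
        by (intro path_image_subpath_subset) (use s0 t0 in auto)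
    next
      case 2 then have "Suc i < n" using m by simp
      then show ?thesis unfolding \<alpha>mid[OF 2]
        by (intro path_image_subpath_subset) (use Tin[of i] in auto)
    next
      case 3 then show ?thesis unfolding 3 \<alpha>m
        by (intro path_image_subpath_subset) (use tl inv[OF m(1)] in auto)
    qed
  qed
  have start\<alpha>: "pathstart (\<alpha> i) = P i" if "i < n" for i
  proof -
    have "i < m \<or> i = m" using that m by linarith
    then show ?thesis unfolding \<alpha>_def P_def using s0 m by auto
  qed
  have fin\<alpha>: "pathfinish (\<alpha> i) = P ((i + 1) mod n)" if "i < n" for i
  proof -
    consider "i = 0" | "i \<noteq> 0" "i < m" | "i = m" using \<open>i < n\<close> m by linarith
    then show ?thesis
    proof cases
      case 1 then show ?thesis unfolding \<alpha>_def P_def using t0e n0 by simp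
    next
      case 2 then have "Suc i < n" using m by simp
      then show ?thesis unfolding \<alpha>_def P_def using 2 Tend[of i] by simp
    next
      case 3 then show ?thesis unfolding \<alpha>_def P_def using m by simp
    qed
  qed
  have Pin: "P i \<in> OI i" if "i < n" for i
    unfolding P_def using q0 inv[OF that] by simp
  have seg: "path_image (\<alpha> i) \<subseteq> \<beta> i ` {sq i..T i (sq i)}" if "Suc i < n" for i
  proof (cases "i = 0")
    case True
    have "path_image (\<alpha> i) = \<beta> 0 ` {s0..t0}" unfolding \<alpha>_def using True s0 by (simp add: path_image_subpath)
    also have "\<dots> \<subseteq> \<beta> 0 ` {0..t0}" using s0 by auto
    finally show ?thesis using True sq0 unfolding t0_def by simp
  next
    case False
    then have "i < m" using that m by simp
    then show ?thesis unfolding \<alpha>_def using False Tlt[OF that] by (simp add: path_image_subpath)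
  qed
  have segm: "path_image (\<alpha> m) = \<beta> m ` {sq m..tl}"
    unfolding \<alpha>_def using m tlm by (simp add: path_image_subpath)
  have \<alpha>0K: "path_image (\<alpha> 0) \<subseteq> K"
  proof -
    have "path_image (\<alpha> 0) = \<beta> 0 ` {s0..t0}" unfolding \<alpha>_def using s0 by (simp add: path_image_subpath)
    then show ?thesis unfolding K using s0 by auto
  qed
  have adj: "path_image (\<alpha> i) \<inter> path_image (\<alpha> (Suc i)) \<subseteq> {P (Suc i)}" if si: "Suc i < n" for i
  proof
    fix x assume x: "x \<in> path_image (\<alpha> i) \<inter> path_image (\<alpha> (Suc i))"
    then obtain u where u: "u \<in> {sq i..T i (sq i)}" "x = \<beta> i u" using seg[OF si] by blast
    have "x \<in> path_image (\<beta> (Suc i))" using x img\<alpha>[OF si] by blast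
    then have "\<not> u < T i (sq i)" using Tprop[OF si Tin(2)[OF si]] u by auto
    then have "u = T i (sq i)" using u by simp
    then show "x \<in> {P (Suc i)}" using u Tend[OF si] unfolding P_def by simp
  qed
  have adjm: "path_image (\<alpha> m) \<inter> path_image (\<alpha> 0) \<subseteq> {P 0}"
  proof
    fix x assume x: "x \<in> path_image (\<alpha> m) \<inter> path_image (\<alpha> 0)"
    then obtain u where u: "u \<in> {sq m..tl}" "x = \<beta> m u" using segm by blast
    have "x \<in> K" using x \<alpha>0K by blast
    then have "\<not> u < tl" using tl(3) u by auto
    then have "u = tl" using u by simp
    then show "x \<in> {P 0}" using u unfolding P_def by simp
  qed
  have non: "path_image (\<alpha> i) \<inter> path_image (\<alpha> j) = {}"
    if "i < n" "j < n" "i \<noteq> j" "j \<noteq> (i + 1) mod n" "i \<noteq> (j + 1) mod n" for i j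
    using UUnon[OF that] img\<alpha>[OF that(1)] img\<alpha>[OF that(2)] \<beta>[OF that(1)] \<beta>[OF that(2)] by blast

  define gs where "gs = map \<alpha> [1..<n]"
  have len: "length gs = m" unfolding gs_def m_def by simp
  have nth: "gs ! k = \<alpha> (Suc k)" if "k < m" for k unfolding gs_def using that m by simp
  have setgs: "set gs = \<alpha> ` {1..<n}" unfolding gs_def by simp
  have R: "arc (path_concat gs) \<and> pathstart (path_concat gs) = pathstart (hd gs)
     \<and> pathfinish (path_concat gs) = pathfinish (last gs)
     \<and> path_image (path_concat gs) = (\<Union>g\<in>set gs. path_image g)"
  proof (rule concat_arc)
    show "gs \<noteq> []" using len m by auto
    show "\<forall>g\<in>set gs. arc g" using setgs arc\<alpha> by auto
    show "\<forall>k. Suc k < length gs \<longrightarrow> pathfinish (gs!k) = pathstart (gs!Suc k)"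
    proof (intro allI impI)
      fix k assume k: "Suc k < length gs"
      then have k2: "Suc (Suc k) < n" using len m by simp
      have "(Suc k + 1) mod n = Suc (Suc k)" using k2 by simp
      then show "pathfinish (gs!k) = pathstart (gs!Suc k)"
        using nth[of k] nth[of "Suc k"] k len fin\<alpha>[of "Suc k"] start\<alpha>[OF k2] k2 by simp
    qed
    show "\<forall>k. Suc k < length gs \<longrightarrow> path_image (gs!k) \<inter> path_image (gs!Suc k) \<subseteq> {pathstart (gs!Suc k)}"
    proof (intro allI impI)
      fix k assume k: "Suc k < length gs"
      then have k2: "Suc (Suc k) < n" using len m by simp
      then show "path_image (gs!k) \<inter> path_image (gs!Suc k) \<subseteq> {pathstart (gs!Suc k)}"
        using nth[of k] nth[of "Suc k"] k len adj[OF k2] start\<alpha>[OF k2] by simp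
    qed
    show "\<forall>k l. Suc k < l \<longrightarrow> l < length gs \<longrightarrow> path_image (gs!k) \<inter> path_image (gs!l) = {}"
    proof (intro allI impI)
      fix k l assume kl: "Suc k < l" "l < length gs"
      have a1: "Suc k < n" "Suc l < n" "Suc k \<noteq> Suc l" using kl len m by auto
      have a2: "(Suc k + 1) mod n = Suc (Suc k)" using kl len m by simp
      have a3: "Suc k \<noteq> (Suc l + 1) mod n"
      proof (cases "Suc l + 1 < n")
        case True then show ?thesis using kl by simp
      next
        case False then have "Suc l + 1 = n" using a1 by simp
        then show ?thesis by simp
      qed
      have "path_image (\<alpha> (Suc k)) \<inter> path_image (\<alpha> (Suc l)) = {}"
        by (rule non) (use a1 a2 a3 kl in auto)
      then show "path_image (gs!k) \<inter> path_image (gs!l) = {}" using nth kl len by simp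
    qed
  qed
  define r where "r = path_concat gs"
  have hd: "hd gs = \<alpha> 1"
  proof -
    have "gs \<noteq> []" using len m by auto
    then have "hd gs = gs ! 0" by (simp add: hd_conv_nth)
    then show ?thesis using nth[of 0] m by simp
  qed
  have last: "last gs = \<alpha> m"
  proof -
    have "gs \<noteq> []" using len m by auto
    then have "last gs = gs ! (length gs - 1)" by (rule last_conv_nth)
    then have "last gs = gs ! (m - 1)" using len by simp
    then show ?thesis using nth[of "m - 1"] m by simp
  qed
  have rprops: "arc r" "pathstart r = P 1" "pathfinish r = P 0"
    "path_image r = (\<Union>j\<in>{1..<n}. path_image (\<alpha> j))"
  proof -
    show "arc r" using R unfolding r_def by blast
    show "pathstart r = P 1" using R hd start\<alpha>[OF n0(2)] unfolding r_def by simp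
    show "pathfinish r = P 0" using R last fin\<alpha>[OF m(1)] m(5) unfolding r_def by simp
    have "path_image r = (\<Union>g\<in>set gs. path_image g)" using R unfolding r_def by blast
    then show "path_image r = (\<Union>j\<in>{1..<n}. path_image (\<alpha> j))" unfolding setgs by simp
  qed
  have cat: "path_concat (map \<alpha> [0..<n]) = \<alpha> 0 +++ r"
  proof -
    have e1: "[0..<n] = 0 # [1..<n]" using n0 upt_conv_Cons by (metis One_nat_def gr_implies_not0 linorder_neqE_nat)
    have e2: "[1..<n] = 1 # [Suc 1..<n]" using n0 upt_conv_Cons by (metis One_nat_def)
    have "map \<alpha> [0..<n] = \<alpha> 0 # map \<alpha> [1..<n]" unfolding e1 by (rule list.map(2))
    moreover have "map \<alpha> [1..<n] = \<alpha> 1 # map \<alpha> [Suc 1..<n]" unfolding e2 by (rule list.map(2))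
    ultimately show ?thesis unfolding r_def gs_def by (simp only: path_concat.simps(3))
  qed
  have f0: "pathfinish (\<alpha> 0) = P 1" using fin\<alpha>[OF n0(1)] n0 by simp
  have s0P: "pathstart (\<alpha> 0) = P 0" using start\<alpha>[OF n0(1)] .
  have inter: "path_image (\<alpha> 0) \<inter> path_image r \<subseteq> {pathstart (\<alpha> 0), pathstart r}"
  proof
    fix x assume x: "x \<in> path_image (\<alpha> 0) \<inter> path_image r"
    then obtain j where j: "j \<in> {1..<n}" "x \<in> path_image (\<alpha> j)" using rprops(4) by blast
    consider "j = 1" | "j = m" | "j \<noteq> 1" "j \<noteq> m" by blast
    then show "x \<in> {pathstart (\<alpha> 0), pathstart r}"
    proof cases
      case 1 then show ?thesis using adj[OF n0(2)] x j rprops(2) by auto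
    next
      case 2 then show ?thesis using adjm x j s0P by auto
    next
      case 3
      then have "j < m" "0 < j" using j m by auto
      then have "(j + 1) mod n = j + 1" using m by simp
      then have "path_image (\<alpha> 0) \<inter> path_image (\<alpha> j) = {}"
        using non[of 0 j] n0 j 3 by simp
      then show ?thesis using x j by auto
    qed
  qed
  have sp: "simple_path (\<alpha> 0 +++ r)"
    by (rule simple_path_join_loop[OF arc\<alpha>[OF n0(1)] rprops(1)]) (use f0 s0P rprops inter in auto)
  have Uint: "U i \<subseteq> interior (\<Union>i<n. a i)" if "i < n" for i
  proof -
    have j: "(i + 1) mod n < n" using nx .
    show ?thesis unfolding U_def by (rule interior_mono) (use that j in blast)
  qed
  have imgcat: "path_image (\<alpha> 0 +++ r) \<subseteq> interior (\<Union>i<n. a i)"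
  proof -
    have "path_image (\<alpha> 0 +++ r) = path_image (\<alpha> 0) \<union> path_image r"
      by (rule path_image_join) (use f0 rprops in simp)
    also have "\<dots> \<subseteq> (\<Union>i<n. U i)"
    proof -
      have sub: "path_image (\<alpha> j) \<subseteq> U j" if "j < n" for j using img\<alpha>[OF that] \<beta>[OF that] by blast
      have A: "path_image (\<alpha> 0) \<subseteq> (\<Union>i<n. U i)" using sub[OF n0(1)] n0(1) by blast
      have B: "path_image r \<subseteq> (\<Union>i<n. U i)"
      proof
        fix x assume "x \<in> path_image r"
        then obtain j where j: "j \<in> {1..<n}" "x \<in> path_image (\<alpha> j)" using rprops(4) by blast
        then have "j < n" by simp
        then show "x \<in> (\<Union>i<n. U i)" using sub[of j] j(2) by blast
      qed
      show ?thesis using A B by blast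
    qed
    also have "\<dots> \<subseteq> interior (\<Union>i<n. a i)" using Uint by blast
    finally show ?thesis .
  qed
  show ?thesis
  proof (rule exI[of _ \<alpha>], rule exI[of _ P], intro conjI allI impI)
    fix i assume i: "i < n"
    show "jordan_arc (\<alpha> i)" using arc\<alpha>[OF i] unfolding jordan_arc_def arc_def by simp
    show "pathstart (\<alpha> i) = P i" using start\<alpha>[OF i] .
    show "pathfinish (\<alpha> i) = P ((i + 1) mod n)" using fin\<alpha>[OF i] .
    show "path_image (\<alpha> i) \<subseteq> interior (a i \<union> a ((i + 1) mod n))" using img\<alpha>[OF i] \<beta>[OF i] unfolding U_def by blast
    show "P i \<in> interior (a i)" using Pin[OF i] unfolding OI_def .
  next
    show "simple_path (path_concat (map \<alpha> [0..<n]))" using sp cat by simp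
    show "pathfinish (path_concat (map \<alpha> [0..<n])) = pathstart (path_concat (map \<alpha> [0..<n]))"
      using cat rprops s0P by simp
    show "path_image (path_concat (map \<alpha> [0..<n])) \<subseteq> interior (\<Union>i<n. a i)" using imgcat cat by simp
  qed
qed
end
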